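(* For each finite set $B$, the assignment $M\mapsto M^a=(a_M\circ v_M,\,v_M,\,f_M)$ is a bijection from the set of maps whose corner set is $B$ onto the set of $a$-maps acting on $B$.
   Context: A map is a triple $M=(C_M,v_M,f_M)$ where $C_M$ is a finite cubic graph and $v_M,f_M$ are disjoint perfect matchings whose union is a disjoint union of 4-cycles; $a_M$ is the third perfect matching; the vertices of $C_M$ are the corners, and a map is regarded as determined by its three perfect matchings. Each perfect matching is identified with the fixed-point-free involution of the corners sending $x$ to the other end of the matching edge at $x$. An $a$-map on a finite set $B$ is a triple $(R,\Theta,\Phi)$ of permutations of $B$ with: (am1) $\Theta\Phi=\Phi\Theta$ and $\Theta^2=\Phi^2=\mathrm{id}$; (am2) $x,\Theta x,\Phi x,\Theta\Phi x$ are pairwise distinct for all $x\in B$; (am3) $R\Theta=\Theta R^{-1}$; (am4) $R^n(x)\ne\Theta x$ for all integers $n$ and all $x\in B$. *)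

theory Defs
  imports "HOL-Combinatorics.Permutations"
begin

text \<open>A perfect matching of the corner set B, identified with the fixed-point-free
involution of B sending a corner to the other end of its matching edge.\<close>
definition fpf_involution :: "'a set \<Rightarrow> ('a \<Rightarrow> 'a) \<Rightarrow> bool" where
  "fpf_involution B g \<longleftrightarrow> g permutes B \<and> (\<forall>x\<in>B. g (g x) = x \<and> g x \<noteq> x)"

text \<open>Maps with corner set B, given by their three perfect matchings (v, f, a):
v and f are disjoint perfect matchings whose union is a disjoint union of 4-cycles,
and a is the third perfect matching of the cubic (multi)graph.\<close>
definition maps_on :: "'a set \<Rightarrow> (('a \<Rightarrow> 'a) \<times> ('a \<Rightarrow> 'a) \<times> ('a \<Rightarrow> 'a)) set" where
  "maps_on B = {(v, f, a). fpf_involution B v \<and> fpf_involution B f \<and> fpf_involution B a \<and>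
      (\<forall>x\<in>B. v (f x) = f (v x) \<and>
              x \<noteq> v x \<and> x \<noteq> f x \<and> x \<noteq> v (f x) \<and>
              v x \<noteq> f x \<and> v x \<noteq> v (f x) \<and> f x \<noteq> v (f x))}"

text \<open>a-maps on B: triples (R, Theta, Phi) of permutations of B with (am1)-(am4).
Integer powers R^n are expressed via nonnegative powers of R and of its inverse.\<close>
definition amaps_on :: "'a set \<Rightarrow> (('a \<Rightarrow> 'a) \<times> ('a \<Rightarrow> 'a) \<times> ('a \<Rightarrow> 'a)) set" where
  "amaps_on B = {(R, \<Theta>, \<Phi>). R permutes B \<and> \<Theta> permutes B \<and> \<Phi> permutes B \<and>
      \<Theta> \<circ> \<Phi> = \<Phi> \<circ> \<Theta> \<and> \<Theta> \<circ> \<Theta> = id \<and> \<Phi> \<circ> \<Phi> = id \<and>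
      (\<forall>x\<in>B. x \<noteq> \<Theta> x \<and> x \<noteq> \<Phi> x \<and> x \<noteq> \<Theta> (\<Phi> x) \<and>
              \<Theta> x \<noteq> \<Phi> x \<and> \<Theta> x \<noteq> \<Theta> (\<Phi> x) \<and> \<Phi> x \<noteq> \<Theta> (\<Phi> x)) \<and>
      R \<circ> \<Theta> = \<Theta> \<circ> inv R \<and>
      (\<forall>n::nat. \<forall>x\<in>B. (R ^^ n) x \<noteq> \<Theta> x \<and> (inv R ^^ n) x \<noteq> \<Theta> x)}"

end

theory Submission
  imports Defs
begin

lemma fpf_basic:
  assumes "fpf_involution B v"
  shows "v \<circ> v = id" "bij v" "\<And>x. v (v x) = x" "\<And>x. x \<in> B \<Longrightarrow> v x \<in> B"
        "\<And>x. x \<in> B \<Longrightarrow> v x \<noteq> x" "inv v = v"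
proof -
  have p: "v permutes B" and h: "\<forall>x\<in>B. v (v x) = x \<and> v x \<noteq> x"
    using assms unfolding fpf_involution_def by auto
  show vv: "\<And>x. v (v x) = x"
  proof -
    fix x show "v (v x) = x"
    proof (cases "x \<in> B")
      case True then show ?thesis using h by blast
    next
      case False then have "v x = x" using p by (simp add: permutes_not_in)
      then show ?thesis by simp
    qed
  qed
  then show "v \<circ> v = id" by auto
  show "bij v" using p permutes_bij by blast
  show "\<And>x. x \<in> B \<Longrightarrow> v x \<in> B" by (simp add: permutes_in_image[OF p])
  show "\<And>x. x \<in> B \<Longrightarrow> v x \<noteq> x" using h by simp
  show "inv v = v" by (rule inv_equality) (simp_all add: vv)
qed

lemma key_conj:
  assumes v: "fpf_involution B v" and a: "fpf_involution B a"
  shows "((a \<circ> v) ^^ k) (v (((a \<circ> v) ^^ k) y)) = v y"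
proof (induction k arbitrary: y)
  case 0
  then show ?case by simp
next
  case (Suc k)
  have A: "((a \<circ> v) ^^ Suc k) y = ((a \<circ> v) ^^ k) ((a \<circ> v) y)"
    by (simp add: funpow_Suc_right del: funpow.simps)
  have B: "\<And>z. ((a \<circ> v) ^^ Suc k) z = (a \<circ> v) (((a \<circ> v) ^^ k) z)" by simp
  have "((a \<circ> v) ^^ Suc k) (v (((a \<circ> v) ^^ Suc k) y))
      = (a \<circ> v) (((a \<circ> v) ^^ k) (v (((a \<circ> v) ^^ k) ((a \<circ> v) y))))"
    unfolding A by simp
  also have "\<dots> = (a \<circ> v) (v ((a \<circ> v) y))" by (simp only: Suc.IH)
  also have "\<dots> = v y" using fpf_basic(3)[OF v] fpf_basic(3)[OF a] by simp
  finally show ?case .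
qed

lemma pow_ne:
  assumes v: "fpf_involution B v" and a: "fpf_involution B a" and x: "x \<in> B"
  shows "((a \<circ> v) ^^ n) x \<noteq> v x"
proof
  assume eq: "((a \<circ> v) ^^ n) x = v x"
  let ?R = "a \<circ> v"
  have bR: "bij ?R" using fpf_basic(2)[OF v] fpf_basic(2)[OF a] bij_comp by blast
  have injk: "\<And>k. inj (?R ^^ k)" using bij_fn[OF bR] bij_is_inj by blast
  have RB: "\<And>k y. y \<in> B \<Longrightarrow> (?R ^^ k) y \<in> B"
  proof -
    fix k y assume "y \<in> B" then show "(?R ^^ k) y \<in> B"
      by (induction k) (auto intro: fpf_basic(4)[OF v] fpf_basic(4)[OF a])
  qed
  obtain k where "n = 2 * k \<or> n = 2 * k + 1" by (metis oddE evenE)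
  then show False
  proof
    assume n: "n = 2 * k"
    define y where "y = (?R ^^ k) x"
    have "(?R ^^ k) y = v x" using eq n unfolding y_def
      by (simp add: funpow_add mult_2)
    moreover have "(?R ^^ k) (v y) = v x" using key_conj[OF v a, of k x] y_def by simp
    ultimately have "v y = y" using injk[of k] by (metis injD)
    moreover have "y \<in> B" using RB x y_def by simp
    ultimately show False using fpf_basic(5)[OF v] by blast
  next
    assume n: "n = 2 * k + 1"
    define y where "y = (?R ^^ k) x"
    have "(?R ^^ k) (?R y) = v x" using eq n unfolding y_def
      by (simp add: funpow_add[symmetric] mult_2 funpow_Suc_right del: funpow.simps)
         (metis add.commute comp_apply funpow_add funpow_Suc_right)
    moreover have "(?R ^^ k) (v y) = v x" using key_conj[OF v a, of k x] y_def by simp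
    ultimately have "?R y = v y" using injk[of k] by (metis injD)
    then have "a (v y) = v y" by simp
    moreover have "v y \<in> B" using RB x y_def fpf_basic(4)[OF v] by simp
    ultimately show False using fpf_basic(5)[OF a] by blast
  qed
qed

lemma inv_pow_eq:
  assumes v: "fpf_involution B v" and a: "fpf_involution B a"
  shows "(inv (a \<circ> v)) ^^ n = v \<circ> (a \<circ> v) ^^ n \<circ> v"
proof -
  have i: "inv (a \<circ> v) = v \<circ> a"
    using o_inv_distrib[OF fpf_basic(2)[OF a] fpf_basic(2)[OF v]] fpf_basic(6)[OF v] fpf_basic(6)[OF a]
    by simp
  show ?thesis unfolding i
  proof (induction n)
    case 0 then show ?case using fpf_basic(1)[OF v] by simp
  next
    case (Suc n)
    show ?case
      using Suc by (simp add: fun_eq_iff fpf_basic(3)[OF v])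
  qed
qed

lemma map_to_amap:
  assumes "(v, f, a) \<in> maps_on B"
  shows "(a \<circ> v, v, f) \<in> amaps_on B"
proof -
  have v: "fpf_involution B v" and f: "fpf_involution B f" and a: "fpf_involution B a"
    and c: "\<forall>x\<in>B. v (f x) = f (v x) \<and>
              x \<noteq> v x \<and> x \<noteq> f x \<and> x \<noteq> v (f x) \<and>
              v x \<noteq> f x \<and> v x \<noteq> v (f x) \<and> f x \<noteq> v (f x)"
    using assms unfolding maps_on_def by auto
  have pv: "v permutes B" and pf: "f permutes B" and pa: "a permutes B"
    using v f a unfolding fpf_involution_def by auto
  have comm: "v \<circ> f = f \<circ> v"
  proof
    fix x show "(v \<circ> f) x = (f \<circ> v) x"
    proof (cases "x \<in> B")
      case True then show ?thesis using c by simp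
    next
      case False then show ?thesis using pv pf by (simp add: permutes_not_in)
    qed
  qed
  have i: "inv (a \<circ> v) = v \<circ> a"
    using o_inv_distrib[OF fpf_basic(2)[OF a] fpf_basic(2)[OF v]] fpf_basic(6)[OF v] fpf_basic(6)[OF a]
    by simp
  have am3: "(a \<circ> v) \<circ> v = v \<circ> inv (a \<circ> v)"
    unfolding i using fpf_basic(3)[OF v] by (simp add: fun_eq_iff)
  have am4: "\<forall>n::nat. \<forall>x\<in>B. ((a \<circ> v) ^^ n) x \<noteq> v x \<and> (inv (a \<circ> v) ^^ n) x \<noteq> v x"
  proof (intro allI ballI conjI)
    fix n x assume x: "x \<in> B"
    show "((a \<circ> v) ^^ n) x \<noteq> v x" using pow_ne[OF v a x] .
    have "((a \<circ> v) ^^ n) (v x) \<noteq> v (v x)"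
      using pow_ne[OF v a fpf_basic(4)[OF v x]] .
    then show "(inv (a \<circ> v) ^^ n) x \<noteq> v x"
      unfolding inv_pow_eq[OF v a] using fpf_basic(3)[OF v] by (metis comp_apply)
  qed
  have d: "\<forall>x\<in>B. x \<noteq> v x \<and> x \<noteq> f x \<and> x \<noteq> v (f x) \<and>
              v x \<noteq> f x \<and> v x \<noteq> v (f x) \<and> f x \<noteq> v (f x)"
    using c by blast
  have pR: "(a \<circ> v) permutes B" using permutes_compose[OF pv pa] .
  show ?thesis unfolding amaps_on_def mem_Collect_eq prod.case
    using pR pv pf comm fpf_basic(1)[OF v] fpf_basic(1)[OF f] d am3 am4
    by (intro conjI) (assumption+)
qed

lemma amap_to_map:
  assumes "(R, T, P) \<in> amaps_on B"
  shows "(T, P, R \<circ> T) \<in> maps_on B" and "(R \<circ> T) \<circ> T = R"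
proof -
  have pR: "R permutes B" and pT: "T permutes B" and pP: "P permutes B"
    and TP: "T \<circ> P = P \<circ> T" and TT: "T \<circ> T = id" and PP: "P \<circ> P = id"
    and d: "\<forall>x\<in>B. x \<noteq> T x \<and> x \<noteq> P x \<and> x \<noteq> T (P x) \<and>
              T x \<noteq> P x \<and> T x \<noteq> T (P x) \<and> P x \<noteq> T (P x)"
    and am3: "R \<circ> T = T \<circ> inv R"
    and am4: "\<forall>n::nat. \<forall>x\<in>B. (R ^^ n) x \<noteq> T x \<and> (inv R ^^ n) x \<noteq> T x"
    using assms unfolding amaps_on_def by auto
  show "(R \<circ> T) \<circ> T = R" using TT by (simp add: comp_assoc)
  have TTx: "\<And>x. T (T x) = x" using TT by (metis comp_apply id_apply)
  have PPx: "\<And>x. P (P x) = x" using PP by (metis comp_apply id_apply)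
  have fT: "fpf_involution B T" unfolding fpf_involution_def using pT TTx d by auto
  have fP: "fpf_involution B P" unfolding fpf_involution_def using pP PPx d by auto
  have RinvR: "R \<circ> inv R = id" using permutes_inv_o(1)[OF pR] .
  have "T \<circ> R \<circ> T = inv R" using am3 TT by (metis comp_assoc comp_id id_comp)
  hence "(R \<circ> T) \<circ> (R \<circ> T) = id" using RinvR by (metis comp_assoc)
  hence aa: "\<And>x. (R \<circ> T) ((R \<circ> T) x) = x" by (metis comp_apply id_apply)
  have nfix: "\<And>x. x \<in> B \<Longrightarrow> (R \<circ> T) x \<noteq> x"
  proof
    fix x assume x: "x \<in> B" and e: "(R \<circ> T) x = x"
    have Tx: "T x \<in> B" using x by (simp add: permutes_in_image[OF pT])
    have "(R ^^ 1) (T x) \<noteq> T (T x)" using am4[rule_format, OF Tx, of 1] by (rule conjunct1)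
    then show False using e TTx by simp
  qed
  have fa: "fpf_involution B (R \<circ> T)" unfolding fpf_involution_def
    using permutes_compose[OF pT pR] aa nfix by auto
  have "\<forall>x\<in>B. T (P x) = P (T x)" using TP by (metis comp_apply)
  then show "(T, P, R \<circ> T) \<in> maps_on B" unfolding maps_on_def
    using fT fP fa d by auto
qed

theorem proposition1p1:
  fixes B :: "'a set"
  assumes "finite B"
  shows "bij_betw (\<lambda>(v, f, a). (a \<circ> v, v, f)) (maps_on B) (amaps_on B)"
  unfolding bij_betw_def
proof (intro conjI)
  show "inj_on (\<lambda>(v, f, a). (a \<circ> v, v, f)) (maps_on B)"
  proof (rule inj_onI)
    fix m1 m2 assume m1: "m1 \<in> maps_on B" and m2: "m2 \<in> maps_on B"
      and e: "(\<lambda>(v, f, a). (a \<circ> v, v, f)) m1 = (\<lambda>(v, f, a). (a \<circ> v, v, f)) m2"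
    obtain v1 f1 a1 where 1: "m1 = (v1, f1, a1)" by (cases m1) auto
    obtain v2 f2 a2 where 2: "m2 = (v2, f2, a2)" by (cases m2) auto
    have v1: "fpf_involution B v1" using m1 1 unfolding maps_on_def by auto
    have e': "a1 \<circ> v1 = a2 \<circ> v2" "v1 = v2" "f1 = f2" using e 1 2 by auto
    have "a1 = (a1 \<circ> v1) \<circ> v1" using fpf_basic(1)[OF v1] by (simp add: comp_assoc)
    also have "\<dots> = a2" using e' fpf_basic(1)[OF v1] by (simp add: comp_assoc)
    finally show "m1 = m2" using 1 2 e' by simp
  qed
next
  show "(\<lambda>(v, f, a). (a \<circ> v, v, f)) ` maps_on B = amaps_on B"
  proof
    show "(\<lambda>(v, f, a). (a \<circ> v, v, f)) ` maps_on B \<subseteq> amaps_on B"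
      using map_to_amap by auto
  next
    show "amaps_on B \<subseteq> (\<lambda>(v, f, a). (a \<circ> v, v, f)) ` maps_on B"
    proof
      fix m assume m: "m \<in> amaps_on B"
      obtain R T P where mm: "m = (R, T, P)" by (cases m) auto
      have "(T, P, R \<circ> T) \<in> maps_on B" "(R \<circ> T) \<circ> T = R"
        using amap_to_map m mm by auto
      then show "m \<in> (\<lambda>(v, f, a). (a \<circ> v, v, f)) ` maps_on B"
        using mm by (auto intro!: image_eqI[where x = "(T, P, R \<circ> T)"])
    qed
  qed
qed

end
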